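(* Let $A[1:n]$ be an array of $n$ items drawn from the universe $U=\{0,\dots,u-1\}$. For every fixed $\epsilon \in [0,1/2]$ there exists a static data structure using $O(n^{2-2\epsilon})$ words of storage that, given any query indices $1 \le i \le j \le n$, returns a mode of the multiset $\{A[i],A[i+1],\dots,A[j]\}$ in $O(n^{\epsilon})$ time in the worst case.
   Context: Model: word RAM with word size $\Theta(\log u)$, where elements are drawn from $U=\{0,\dots,u-1\}$. The frequency of an element $x$ in a multiset $S$ is its multiplicity in $S$. A mode of a multiset $S$ is an element $a\in S$ such that $\operatorname{freq}_S(x)\le \operatorname{freq}_S(a)$ for all $x\in S$. $A[i:j]$ denotes the subarray $A[i],\dots,A[j]$, regarded as a multiset for the purpose of computing modes. *)

theory Defs
  imports Complex_Main "HOL-Library.Multiset"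
begin

definition subarray :: "nat list \<Rightarrow> nat \<Rightarrow> nat \<Rightarrow> nat multiset" where
  "subarray A i j = mset (take (Suc j - i) (drop (i - 1) A))"

definition is_mode :: "nat multiset \<Rightarrow> nat \<Rightarrow> bool" where
  "is_mode S a \<longleftrightarrow> a \<in># S \<and> (\<forall>x \<in># S. count S x \<le> count S a)"

definition nbits :: "nat \<Rightarrow> nat" where
  "nbits x = (LEAST k. x < 2 ^ k)"

text \<open>Word size for an instance with n items from universe {0..u-1}:
  Theta(log u) (for u >= n), large enough to address O(n^2) cells.\<close>
definition wordsize :: "nat \<Rightarrow> nat \<Rightarrow> nat" where
  "wordsize n u = 3 * nbits (n + u)"

text \<open>Instructions; registers are named by naturals, jump targets are program indices.\<close>
datatype instr =
    Const nat nat
  | Add nat nat nat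
  | Sub nat nat nat          \<comment> \<open>r := a - b (truncated at 0)\<close>
  | Mul nat nat nat
  | Div nat nat nat          \<comment> \<open>r := a div b (0 if b = 0)\<close>
  | Mod nat nat nat
  | AndI nat nat nat
  | OrI nat nat nat
  | XorI nat nat nat
  | Shl nat nat nat
  | Shr nat nat nat
  | Less nat nat nat
  | Load nat nat
  | Store nat nat
  | Jz nat nat
  | Jmp nat
  | Halt

record state =
  pc :: nat
  regs :: "nat \<Rightarrow> nat"
  mem :: "nat \<Rightarrow> nat"

definition halted :: "instr list \<Rightarrow> state \<Rightarrow> bool" where
  "halted P s \<longleftrightarrow> pc s \<ge> length P \<or> P ! pc s = Halt"

definition setr :: "state \<Rightarrow> nat \<Rightarrow> nat \<Rightarrow> state" where
  "setr s r v = s\<lparr>pc := Suc (pc s), regs := (regs s)(r := v)\<rparr>"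

fun exec_instr :: "nat \<Rightarrow> instr \<Rightarrow> state \<Rightarrow> state" where
  "exec_instr w (Const r k) s = setr s r (k mod 2^w)"
| "exec_instr w (Add r a b) s = setr s r ((regs s a + regs s b) mod 2^w)"
| "exec_instr w (Sub r a b) s = setr s r (regs s a - regs s b)"
| "exec_instr w (Mul r a b) s = setr s r ((regs s a * regs s b) mod 2^w)"
| "exec_instr w (Div r a b) s = setr s r (regs s a div regs s b)"
| "exec_instr w (Mod r a b) s = setr s r (regs s a mod regs s b)"
| "exec_instr w (AndI r a b) s = setr s r (and (regs s a) (regs s b))"
| "exec_instr w (OrI r a b) s = setr s r (or (regs s a) (regs s b))"
| "exec_instr w (XorI r a b) s = setr s r (xor (regs s a) (regs s b))"
| "exec_instr w (Shl r a b) s = setr s r ((regs s a * 2 ^ regs s b) mod 2^w)"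
| "exec_instr w (Shr r a b) s = setr s r (regs s a div 2 ^ regs s b)"
| "exec_instr w (Less r a b) s = setr s r (if regs s a < regs s b then 1 else 0)"
| "exec_instr w (Load r a) s = setr s r (mem s (regs s a) mod 2^w)"
| "exec_instr w (Store a r) s =
     s\<lparr>pc := Suc (pc s), mem := (mem s)(regs s a := regs s r)\<rparr>"
| "exec_instr w (Jz r l) s = (if regs s r = 0 then s\<lparr>pc := l\<rparr> else s\<lparr>pc := Suc (pc s)\<rparr>)"
| "exec_instr w (Jmp l) s = s\<lparr>pc := l\<rparr>"
| "exec_instr w Halt s = s"

definition step :: "nat \<Rightarrow> instr list \<Rightarrow> state \<Rightarrow> state" where
  "step w P s = (if halted P s then s else exec_instr w (P ! pc s) s)"

definition run :: "nat \<Rightarrow> instr list \<Rightarrow> nat \<Rightarrow> state \<Rightarrow> state" where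
  "run w P t s = (step w P ^^ t) s"

definition query_init :: "(nat \<Rightarrow> nat) \<Rightarrow> nat \<Rightarrow> nat \<Rightarrow> state" where
  "query_init M i j = \<lparr>pc = 0, regs = (\<lambda>_. 0)(0 := i, 1 := j), mem = M\<rparr>"

end

theory Submission
  imports Defs
begin


lemma run_0[simp]: "run w P 0 s = s" by (simp add: run_def)
lemma run_Suc: "run w P (Suc t) s = run w P t (step w P s)"
  by (simp add: run_def funpow_swap1)
lemma run_num: "run w P (numeral k) s = run w P (pred_numeral k) (step w P s)"
  by (simp add: numeral_eq_Suc run_Suc)
lemma run_one: "run w P 1 s = step w P s" by (simp add: run_def)
lemma run_add: "run w P (a + b) s = run w P b (run w P a s)"
  by (metis (no_types) run_def funpow_add add.commute comp_apply)

definition prog :: "instr list" where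
  "prog = [Const 12 1, Sub 13 0 12, Const 14 0, Load 15 14, Const 14 1, Load 16 14, Const 14 2, Load 17 14, Add 18 13 15, Sub 18 18 12, Div 18 18 15, Div 19 1 15, Mul 20 18 15, Mul 21 19 15, Mul 22 18 16, Add 22 22 19, Const 14 3, Load 23 14, Add 23 23 22, Load 0 23, Const 14 4, Load 23 14, Add 23 23 22, Load 5 23, Less 9 20 1, Jz 9 28, Add 3 20 30, Jmp 29, Add 3 1 30, Less 9 21 3, Jz 9 33, Add 25 3 30, Jmp 34, Add 25 21 30, Add 2 13 30, Add 4 1 30, Const 14 5, Load 6 14, Const 14 6, Load 7 14, Const 14 7, Load 8 14, Less 9 2 3, Jz 9 60, Add 10 6 2, Load 10 10, Add 10 10 5, Add 11 7 2, Load 11 11, Less 9 10 11, Jz 9 58, Load 10 10, Less 9 10 4, Jz 9 58, Add 5 5 12, Add 10 8 2, Load 0 10, Jmp 42, Add 2 2 12, Jmp 42, Jz 26 62, Halt, Add 26 12 30, Sub 2 17 1, Sub 3 17 25, Sub 4 17 13, Const 14 8, Load 6 14, Const 14 9, Load 7 14, Const 14 10, Load 8 14, Jmp 42]"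

lemma prog_len: "length prog = 73" by (simp add: prog_def)

lemma prog_0: "prog ! 0 = Const 12 1" by (simp add: prog_def)
lemma prog_1: "prog ! 1 = Sub 13 0 12" by (simp add: prog_def)
lemma prog_2: "prog ! 2 = Const 14 0" by (simp add: prog_def)
lemma prog_3: "prog ! 3 = Load 15 14" by (simp add: prog_def)
lemma prog_4: "prog ! 4 = Const 14 1" by (simp add: prog_def)
lemma prog_5: "prog ! 5 = Load 16 14" by (simp add: prog_def)
lemma prog_6: "prog ! 6 = Const 14 2" by (simp add: prog_def)
lemma prog_7: "prog ! 7 = Load 17 14" by (simp add: prog_def)
lemma prog_8: "prog ! 8 = Add 18 13 15" by (simp add: prog_def)
lemma prog_9: "prog ! 9 = Sub 18 18 12" by (simp add: prog_def)
lemma prog_10: "prog ! 10 = Div 18 18 15" by (simp add: prog_def)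
lemma prog_11: "prog ! 11 = Div 19 1 15" by (simp add: prog_def)
lemma prog_12: "prog ! 12 = Mul 20 18 15" by (simp add: prog_def)
lemma prog_13: "prog ! 13 = Mul 21 19 15" by (simp add: prog_def)
lemma prog_14: "prog ! 14 = Mul 22 18 16" by (simp add: prog_def)
lemma prog_15: "prog ! 15 = Add 22 22 19" by (simp add: prog_def)
lemma prog_16: "prog ! 16 = Const 14 3" by (simp add: prog_def)
lemma prog_17: "prog ! 17 = Load 23 14" by (simp add: prog_def)
lemma prog_18: "prog ! 18 = Add 23 23 22" by (simp add: prog_def)
lemma prog_19: "prog ! 19 = Load 0 23" by (simp add: prog_def)
lemma prog_20: "prog ! 20 = Const 14 4" by (simp add: prog_def)
lemma prog_21: "prog ! 21 = Load 23 14" by (simp add: prog_def)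
lemma prog_22: "prog ! 22 = Add 23 23 22" by (simp add: prog_def)
lemma prog_23: "prog ! 23 = Load 5 23" by (simp add: prog_def)
lemma prog_24: "prog ! 24 = Less 9 20 1" by (simp add: prog_def)
lemma prog_25: "prog ! 25 = Jz 9 28" by (simp add: prog_def)
lemma prog_26: "prog ! 26 = Add 3 20 30" by (simp add: prog_def)
lemma prog_27: "prog ! 27 = Jmp 29" by (simp add: prog_def)
lemma prog_28: "prog ! 28 = Add 3 1 30" by (simp add: prog_def)
lemma prog_29: "prog ! 29 = Less 9 21 3" by (simp add: prog_def)
lemma prog_30: "prog ! 30 = Jz 9 33" by (simp add: prog_def)
lemma prog_31: "prog ! 31 = Add 25 3 30" by (simp add: prog_def)
lemma prog_32: "prog ! 32 = Jmp 34" by (simp add: prog_def)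
lemma prog_33: "prog ! 33 = Add 25 21 30" by (simp add: prog_def)
lemma prog_34: "prog ! 34 = Add 2 13 30" by (simp add: prog_def)
lemma prog_35: "prog ! 35 = Add 4 1 30" by (simp add: prog_def)
lemma prog_36: "prog ! 36 = Const 14 5" by (simp add: prog_def)
lemma prog_37: "prog ! 37 = Load 6 14" by (simp add: prog_def)
lemma prog_38: "prog ! 38 = Const 14 6" by (simp add: prog_def)
lemma prog_39: "prog ! 39 = Load 7 14" by (simp add: prog_def)
lemma prog_40: "prog ! 40 = Const 14 7" by (simp add: prog_def)
lemma prog_41: "prog ! 41 = Load 8 14" by (simp add: prog_def)
lemma prog_42: "prog ! 42 = Less 9 2 3" by (simp add: prog_def)
lemma prog_43: "prog ! 43 = Jz 9 60" by (simp add: prog_def)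
lemma prog_44: "prog ! 44 = Add 10 6 2" by (simp add: prog_def)
lemma prog_45: "prog ! 45 = Load 10 10" by (simp add: prog_def)
lemma prog_46: "prog ! 46 = Add 10 10 5" by (simp add: prog_def)
lemma prog_47: "prog ! 47 = Add 11 7 2" by (simp add: prog_def)
lemma prog_48: "prog ! 48 = Load 11 11" by (simp add: prog_def)
lemma prog_49: "prog ! 49 = Less 9 10 11" by (simp add: prog_def)
lemma prog_50: "prog ! 50 = Jz 9 58" by (simp add: prog_def)
lemma prog_51: "prog ! 51 = Load 10 10" by (simp add: prog_def)
lemma prog_52: "prog ! 52 = Less 9 10 4" by (simp add: prog_def)
lemma prog_53: "prog ! 53 = Jz 9 58" by (simp add: prog_def)
lemma prog_54: "prog ! 54 = Add 5 5 12" by (simp add: prog_def)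
lemma prog_55: "prog ! 55 = Add 10 8 2" by (simp add: prog_def)
lemma prog_56: "prog ! 56 = Load 0 10" by (simp add: prog_def)
lemma prog_57: "prog ! 57 = Jmp 42" by (simp add: prog_def)
lemma prog_58: "prog ! 58 = Add 2 2 12" by (simp add: prog_def)
lemma prog_59: "prog ! 59 = Jmp 42" by (simp add: prog_def)
lemma prog_60: "prog ! 60 = Jz 26 62" by (simp add: prog_def)
lemma prog_61: "prog ! 61 = Halt" by (simp add: prog_def)
lemma prog_62: "prog ! 62 = Add 26 12 30" by (simp add: prog_def)
lemma prog_63: "prog ! 63 = Sub 2 17 1" by (simp add: prog_def)
lemma prog_64: "prog ! 64 = Sub 3 17 25" by (simp add: prog_def)
lemma prog_65: "prog ! 65 = Sub 4 17 13" by (simp add: prog_def)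
lemma prog_66: "prog ! 66 = Const 14 8" by (simp add: prog_def)
lemma prog_67: "prog ! 67 = Load 6 14" by (simp add: prog_def)
lemma prog_68: "prog ! 68 = Const 14 9" by (simp add: prog_def)
lemma prog_69: "prog ! 69 = Load 7 14" by (simp add: prog_def)
lemma prog_70: "prog ! 70 = Const 14 10" by (simp add: prog_def)
lemma prog_71: "prog ! 71 = Load 8 14" by (simp add: prog_def)
lemma prog_72: "prog ! 72 = Jmp 42" by (simp add: prog_def)
lemmas prog_at = prog_0 prog_1 prog_2 prog_3 prog_4 prog_5 prog_6 prog_7 prog_8 prog_9 prog_10 prog_11 prog_12 prog_13 prog_14 prog_15 prog_16 prog_17 prog_18 prog_19 prog_20 prog_21 prog_22 prog_23 prog_24 prog_25 prog_26 prog_27 prog_28 prog_29 prog_30 prog_31 prog_32 prog_33 prog_34 prog_35 prog_36 prog_37 prog_38 prog_39 prog_40 prog_41 prog_42 prog_43 prog_44 prog_45 prog_46 prog_47 prog_48 prog_49 prog_50 prog_51 prog_52 prog_53 prog_54 prog_55 prog_56 prog_57 prog_58 prog_59 prog_60 prog_61 prog_62 prog_63 prog_64 prog_65 prog_66 prog_67 prog_68 prog_69 prog_70 prog_71 prog_72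

lemma step_eq: "pc s < length prog \<Longrightarrow> prog ! pc s \<noteq> Halt \<Longrightarrow> step w prog s = exec_instr w (prog ! pc s) s"
  by (simp add: step_def halted_def)

definition cntR :: "nat list \<Rightarrow> nat \<Rightarrow> nat \<Rightarrow> nat \<Rightarrow> nat" where
  "cntR B x l h = card {q. l \<le> q \<and> q < h \<and> B!q = x}"
definition clt :: "nat list \<Rightarrow> nat \<Rightarrow> nat" where
  "clt B x = card {q. q < length B \<and> B!q < x}"
definition rnk :: "nat list \<Rightarrow> nat \<Rightarrow> nat" where
  "rnk B k = cntR B (B!k) 0 k"
definition posn :: "nat list \<Rightarrow> nat \<Rightarrow> nat" where
  "posn B k = clt B (B!k) + rnk B k"
definition endp :: "nat list \<Rightarrow> nat \<Rightarrow> nat" where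
  "endp B k = clt B (B!k) + cntR B (B!k) 0 (length B)"
definition qa :: "nat list \<Rightarrow> nat \<Rightarrow> nat" where
  "qa B a = (if \<exists>q. q < length B \<and> posn B q = a then SOME q. q < length B \<and> posn B q = a else 0)"

lemma cntR_filter: "cntR B x l h = length (filter (\<lambda>q. B!q = x) [l..<h])"
proof -
  have "set (filter (\<lambda>q. B!q = x) [l..<h]) = {q. l \<le> q \<and> q < h \<and> B!q = x}" by auto
  then show ?thesis unfolding cntR_def by (metis distinct_card distinct_filter distinct_upt)
qed

lemma cntR_split: "l \<le> m \<Longrightarrow> m \<le> h \<Longrightarrow> cntR B x l h = cntR B x l m + cntR B x m h"
proof -
  assume a: "l \<le> m" "m \<le> h"
  then have "[l..<h] = [l..<m] @ [m..<h]" by (metis le_Suc_ex upt_add_eq_append)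
  then show ?thesis by (simp add: cntR_filter)
qed

lemma cntR_Suc: "l \<le> h \<Longrightarrow> cntR B x l (Suc h) = cntR B x l h + (if B!h = x then 1 else 0)"
  by (simp add: cntR_filter)

lemma cntR_empty: "h \<le> l \<Longrightarrow> cntR B x l h = 0"
  by (simp add: cntR_filter)

lemma cntR_mono: "h \<le> h' \<Longrightarrow> cntR B x l h \<le> cntR B x l h'"
proof -
  assume a: "h \<le> h'"
  have "{q. l \<le> q \<and> q < h \<and> B!q = x} \<subseteq> {q. l \<le> q \<and> q < h' \<and> B!q = x}" using a by auto
  then show ?thesis unfolding cntR_def by (rule card_mono[rotated]) auto
qed

lemma cntR_ivt: "r < cntR B x 0 h \<Longrightarrow> \<exists>q<h. B!q = x \<and> cntR B x 0 q = r"
proof (induction h)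
  case 0 then show ?case by (simp add: cntR_empty)
next
  case (Suc h)
  show ?case
  proof (cases "r < cntR B x 0 h")
    case True then show ?thesis using Suc.IH by (meson less_SucI)
  next
    case False
    with Suc.prems cntR_Suc[of 0 h B x] have "B!h = x" "cntR B x 0 h = r" by (auto split: if_splits)
    then show ?thesis by auto
  qed
qed

lemma cntR_occ: "B!q = x \<Longrightarrow> (cntR B x 0 q < cntR B x 0 h) \<longleftrightarrow> q < h"
proof
  assume "B!q = x" "cntR B x 0 q < cntR B x 0 h"
  then show "q < h" using cntR_mono[of h q B x 0] by (meson leI not_less)
next
  assume a: "B!q = x" "q < h"
  have "cntR B x 0 (Suc q) = Suc (cntR B x 0 q)" using cntR_Suc[of 0 q B x] a by simp
  moreover have "cntR B x 0 (Suc q) \<le> cntR B x 0 h" using a by (intro cntR_mono) simp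
  ultimately show "cntR B x 0 q < cntR B x 0 h" by simp
qed

lemma rnk_lt: "k < length B \<Longrightarrow> rnk B k < cntR B (B!k) 0 (length B)"
  unfolding rnk_def using cntR_occ by blast

lemma clt_le: assumes "x < x'" shows "clt B x + cntR B x 0 (length B) \<le> clt B x'"
proof -
  let ?A = "{q. q < length B \<and> B!q < x}" and ?C = "{q. 0 \<le> q \<and> q < length B \<and> B!q = x}"
  have "card ?A + card ?C = card (?A \<union> ?C)" by (rule card_Un_disjoint[symmetric]) auto
  also have "\<dots> \<le> card {q. q < length B \<and> B!q < x'}" by (rule card_mono) (use assms in auto)
  finally show ?thesis unfolding clt_def cntR_def .
qed

lemma clt_cnt_le: "clt B x + cntR B x 0 (length B) \<le> length B"
proof -
  let ?A = "{q. q < length B \<and> B!q < x}" and ?C = "{q. 0 \<le> q \<and> q < length B \<and> B!q = x}"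
  have "card ?A + card ?C = card (?A \<union> ?C)" by (rule card_Un_disjoint[symmetric]) auto
  also have "\<dots> \<le> card {..<length B}" by (rule card_mono) auto
  finally show ?thesis unfolding clt_def cntR_def by simp
qed

lemma endp_le: "k < length B \<Longrightarrow> endp B k \<le> length B"
  unfolding endp_def using clt_cnt_le by blast

lemma posn_lt: "k < length B \<Longrightarrow> posn B k < endp B k"
  unfolding endp_def posn_def using rnk_lt by simp

lemma posn_inj: assumes "q < length B" "q' < length B" "posn B q = posn B q'" shows "q = q'"
proof (rule ccontr)
  assume ne: "q \<noteq> q'"
  { fix a b assume ab: "a < length B" "b < length B" "posn B a = posn B b" "a < b"
    have False
    proof (cases "B!a = B!b")
      case True
      then have "rnk B a < rnk B b" unfolding rnk_def using cntR_occ[of B a "B!a" b] ab by simp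
      then show False using ab True by (simp add: posn_def)
    next
      case False
      { fix c d assume cd: "c < length B" "d < length B" "posn B c = posn B d" "B!c < B!d"
        have "posn B c < clt B (B!d)" using posn_lt[OF cd(1)] clt_le[OF cd(4), of B] unfolding endp_def by simp
        then have False using cd by (simp add: posn_def) }
      then show False using ab False by (metis linorder_neqE_nat)
    qed }
  then show False using assms ne by (metis linorder_neqE_nat)
qed

lemma qa_eq: "q < length B \<Longrightarrow> qa B (posn B q) = q"
proof -
  assume q: "q < length B"
  then have ex: "\<exists>q'. q' < length B \<and> posn B q' = posn B q" by blast
  have "(SOME q'. q' < length B \<and> posn B q' = posn B q) = q"
    by (rule some_equality) (use q posn_inj in auto)
  then show ?thesis using ex by (simp add: qa_def)
qed

lemma keyl: assumes "k < length B" "k < h" "h \<le> length B"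
  shows "(posn B k + f < endp B k \<and> qa B (posn B k + f) < h) \<longleftrightarrow> f < cntR B (B!k) k h"
proof -
  define x where "x = B!k"
  define g where "g = (\<lambda>h. cntR B x 0 h)"
  have ch: "cntR B x k h = g h - g k" using cntR_split[of 0 k h B x] assms by (simp add: g_def)
  have rk: "rnk B k = g k" by (simp add: rnk_def g_def x_def)
  show ?thesis
  proof (cases "g k + f < g (length B)")
    case True
    then obtain q where q: "q < length B" "B!q = x" "g q = g k + f"
      using cntR_ivt[of "g k + f" B x "length B"] by (auto simp: g_def)
    have pq: "posn B q = posn B k + f" using q rk by (simp add: posn_def rnk_def g_def x_def)
    have "qa B (posn B k + f) = q" using qa_eq[OF q(1)] pq by simp
    moreover have "posn B k + f < endp B k" using True rk by (simp add: posn_def endp_def g_def x_def)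
    moreover have "q < h \<longleftrightarrow> g q < g h" using cntR_occ[of B q x h] q by (simp add: g_def)
    ultimately show ?thesis using ch q by (simp add: x_def[symmetric]) linarith
  next
    case False
    have "\<not> posn B k + f < endp B k" using False rk by (simp add: posn_def endp_def g_def x_def)
    moreover have "g h \<le> g (length B)" using assms cntR_mono by (simp add: g_def)
    ultimately show ?thesis using ch False by (simp add: x_def[symmetric])
  qed
qed

definition proc :: "nat list \<Rightarrow> nat \<Rightarrow> nat \<times> nat \<Rightarrow> nat \<Rightarrow> nat \<times> nat" where
  "proc B h cf k = (let v = cntR B (B!k) k h in if snd cf < v then (B!k, v) else cf)"

definition Inv :: "nat list \<Rightarrow> nat \<Rightarrow> nat \<Rightarrow> nat \<Rightarrow> nat \<Rightarrow> nat set \<Rightarrow> nat \<times> nat \<Rightarrow> bool" where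
  "Inv A lo hi pe se D cf \<longleftrightarrow> snd cf \<le> cntR A (fst cf) lo hi \<and> (\<forall>y. cntR A y pe se \<le> snd cf) \<and>
     (\<forall>k\<in>D. cntR A (A!k) lo hi \<le> snd cf)"

lemma cntR_sub: "l \<le> l' \<Longrightarrow> h' \<le> h \<Longrightarrow> cntR B x l' h' \<le> cntR B x l h"
  unfolding cntR_def by (rule card_mono) auto

lemma cntR_zero: "(\<forall>q. l \<le> q \<and> q < h \<longrightarrow> B!q \<noteq> x) \<Longrightarrow> cntR B x l h = 0"
  unfolding cntR_def by auto

lemma phase1_step:
  assumes I: "Inv A lo hi pe se {lo..<k} cf" and k: "lo \<le> k" "k < hi"
  shows "Inv A lo hi pe se {lo..<Suc k} (proc A hi cf k)"
proof -
  obtain c f where cf: "cf = (c,f)" by fastforce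
  define x where "x = A!k"
  define v where "v = cntR A x k hi"
  have vle: "v \<le> cntR A x lo hi" unfolding v_def using k by (intro cntR_sub) auto
  have p: "proc A hi (c,f) k = (if f < v then (x, v) else (c, f))"
    by (simp add: proc_def x_def v_def Let_def)
  have kk: "cntR A x lo hi \<le> max f v"
  proof (cases "\<exists>k0. lo \<le> k0 \<and> k0 < k \<and> A!k0 = x")
    case True
    then obtain k0 where k0: "lo \<le> k0" "k0 < k" "A!k0 = x" by blast
    then have "k0 \<in> {lo..<k}" by simp
    then have "cntR A (A!k0) lo hi \<le> f" using I by (simp add: Inv_def cf)
    then show ?thesis using k0 by simp
  next
    case False
    then have "cntR A x lo k = 0" by (intro cntR_zero) auto
    then have "cntR A x lo hi = v" using cntR_split[of lo k hi A x] k by (simp add: v_def)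
    then show ?thesis by simp
  qed
  have I': "f \<le> cntR A c lo hi" "\<forall>y. cntR A y pe se \<le> f" "\<forall>k\<in>{lo..<k}. cntR A (A!k) lo hi \<le> f"
    using I by (auto simp: Inv_def cf)
  have D: "{lo..<Suc k} = insert k {lo..<k}" using k by auto
  have xk: "A!k = x" by (simp add: x_def)
  show ?thesis
  proof (cases "f < v")
    case True
    then show ?thesis unfolding cf p D Inv_def using I' vle kk xk
      by (simp del: atLeastLessThan_iff) (meson le_trans less_imp_le)
  next
    case False
    then show ?thesis unfolding cf p D Inv_def using I' vle kk xk
      by (simp del: atLeastLessThan_iff)
  qed
qed

lemma phase1:
  assumes "Inv A lo hi pe se {lo..<k} cf" "lo \<le> k" "k \<le> pe" "pe \<le> hi"
  shows "Inv A lo hi pe se {lo..<pe} (foldl (proc A hi) cf [k..<pe])"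
  using assms
proof (induction "pe - k" arbitrary: k cf rule: less_induct)
  case less
  show ?case
  proof (cases "k < pe")
    case False
    then have "k = pe" using less.prems by simp
    then show ?thesis using less.prems by simp
  next
    case True
    have ul: "[k..<pe] = k # [Suc k..<pe]" using True by (simp add: upt_conv_Cons)
    have I1: "Inv A lo hi pe se {lo..<Suc k} (proc A hi cf k)"
      using phase1_step[OF less.prems(1) less.prems(2)] True less.prems by simp
    have lt: "pe - Suc k < pe - k" using True by simp
    have b: "lo \<le> Suc k" "Suc k \<le> pe" using True less.prems(2) by auto
    have "Inv A lo hi pe se {lo..<pe} (foldl (proc A hi) (proc A hi cf k) [Suc k..<pe])"
      by (rule less.hyps[OF lt I1 b less.prems(4)])
    then show ?thesis using ul by simp
  qed
qed

lemma cntR_rev: assumes "l \<le> h" "h \<le> length A"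
  shows "cntR (rev A) x l h = cntR A x (length A - h) (length A - l)"
proof -
  let ?n = "length A"
  let ?S = "{q. l \<le> q \<and> q < h \<and> rev A!q = x}"
  have inj: "inj_on (\<lambda>q. ?n - Suc q) ?S" using assms by (auto simp: inj_on_def)
  have "(\<lambda>q. ?n - Suc q) ` ?S = {q. ?n - h \<le> q \<and> q < ?n - l \<and> A!q = x}"
  proof (rule set_eqI, rule iffI)
    fix y assume "y \<in> (\<lambda>q. ?n - Suc q) ` ?S"
    then obtain q where "q \<in> ?S" "y = ?n - Suc q" by blast
    then show "y \<in> {q. ?n - h \<le> q \<and> q < ?n - l \<and> A!q = x}" using assms by (auto simp: rev_nth)
  next
    fix y assume y: "y \<in> {q. ?n - h \<le> q \<and> q < ?n - l \<and> A!q = x}"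
    have "?n - Suc y \<in> ?S" using y assms by (auto simp: rev_nth)
    moreover have "y = ?n - Suc (?n - Suc y)" using y assms by auto
    ultimately show "y \<in> (\<lambda>q. ?n - Suc q) ` ?S" by blast
  qed
  then show ?thesis unfolding cntR_def using card_image[OF inj] by simp
qed

lemma phase2_step:
  assumes I: "Inv A lo hi pe se ({lo..<pe} \<union> {length A - K..<hi}) cf"
    and K: "length A - hi \<le> K" "K < length A - se" and o: "lo \<le> pe" "pe \<le> se" "se \<le> hi" "hi \<le> length A"
  shows "Inv A lo hi pe se ({lo..<pe} \<union> {length A - Suc K..<hi}) (proc (rev A) (length A - lo) cf K)"
proof -
  let ?n = "length A"
  define k where "k = ?n - Suc K"
  have kr: "se \<le> k" "k < hi" "K < ?n" using K o by (auto simp: k_def)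
  obtain c f where cf: "cf = (c,f)" by fastforce
  define x where "x = A!k"
  have rx: "rev A ! K = x" using kr by (simp add: rev_nth x_def k_def)
  define v where "v = cntR A x lo (Suc k)"
  have rv: "cntR (rev A) x K (?n - lo) = v" unfolding v_def using cntR_rev[of K "?n - lo" A x] kr o
    by (simp add: k_def Suc_diff_Suc)
  have vle: "v \<le> cntR A x lo hi" unfolding v_def using kr by (intro cntR_sub) auto
  have p: "proc (rev A) (?n - lo) (c,f) K = (if f < v then (x, v) else (c, f))"
    by (simp add: proc_def rx rv Let_def)
  have kk: "cntR A x lo hi \<le> max f v"
  proof (cases "\<exists>k0. k < k0 \<and> k0 < hi \<and> A!k0 = x")
    case True
    then obtain k0 where k0: "k < k0" "k0 < hi" "A!k0 = x" by blast
    then have "k0 \<in> {?n - K..<hi}" using kr by (auto simp: k_def)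
    then have "cntR A (A!k0) lo hi \<le> f" using I by (simp add: Inv_def cf)
    then show ?thesis using k0 by simp
  next
    case False
    then have "cntR A x (Suc k) hi = 0" by (intro cntR_zero) auto
    then have "cntR A x lo hi = v" using cntR_split[of lo "Suc k" hi A x] kr o by (simp add: v_def)
    then show ?thesis by simp
  qed
  have D: "{lo..<pe} \<union> {?n - Suc K..<hi} = insert k ({lo..<pe} \<union> {?n - K..<hi})"
    using kr K by (auto simp: k_def)
  have I': "f \<le> cntR A c lo hi" "\<forall>y. cntR A y pe se \<le> f" "\<forall>k\<in>{lo..<pe} \<union> {?n - K..<hi}. cntR A (A!k) lo hi \<le> f"
    using I by (auto simp: Inv_def cf)
  have xk: "A!k = x" by (simp add: x_def)
  show ?thesis
  proof (cases "f < v")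
    case True
    then show ?thesis unfolding cf p D Inv_def using I' vle kk xk
      by (simp del: atLeastLessThan_iff Un_iff) (meson le_trans less_imp_le)
  next
    case False
    then show ?thesis unfolding cf p D Inv_def using I' vle kk xk
      by (simp del: atLeastLessThan_iff Un_iff)
  qed
qed

lemma phase2:
  assumes "Inv A lo hi pe se ({lo..<pe} \<union> {length A - K..<hi}) cf"
    "length A - hi \<le> K" "K \<le> length A - se" "lo \<le> pe" "pe \<le> se" "se \<le> hi" "hi \<le> length A"
  shows "Inv A lo hi pe se ({lo..<pe} \<union> {se..<hi}) (foldl (proc (rev A) (length A - lo)) cf [K..<length A - se])"
  using assms
proof (induction "length A - se - K" arbitrary: K cf rule: less_induct)
  case less
  show ?case
  proof (cases "K < length A - se")
    case False
    then have "length A - K = se" using less.prems by simp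
    then show ?thesis using less.prems False by simp
  next
    case True
    have ul: "[K..<length A - se] = K # [Suc K..<length A - se]" using True by (simp add: upt_conv_Cons)
    have I1: "Inv A lo hi pe se ({lo..<pe} \<union> {length A - Suc K..<hi}) (proc (rev A) (length A - lo) cf K)"
      using phase2_step[OF less.prems(1) less.prems(2) True] less.prems by simp
    have lt: "length A - se - Suc K < length A - se - K" using True by simp
    have b: "length A - hi \<le> Suc K" "Suc K \<le> length A - se" using True less.prems(2) by auto
    have "Inv A lo hi pe se ({lo..<pe} \<union> {se..<hi}) (foldl (proc (rev A) (length A - lo)) (proc (rev A) (length A - lo) cf K) [Suc K..<length A - se])"
      by (rule less.hyps[OF lt I1 b less.prems(4-7)])
    then show ?thesis using ul by simp
  qed
qed

lemma final_mode:
  assumes I: "Inv A lo hi pe se ({lo..<pe} \<union> {se..<hi}) cf" and o: "lo \<le> pe" "pe \<le> se" "se \<le> hi" "lo < hi"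
  shows "is_mode (mset (map (nth A) [lo..<hi])) (fst cf)"
proof -
  obtain c f where cf: "cf = (c,f)" by fastforce
  have cnt: "count (mset (map (nth A) [lo..<hi])) y = cntR A y lo hi" for y
    unfolding count_mset count_list_eq_length_filter filter_map length_map cntR_filter o_def
    by (rule arg_cong[where f=length], rule filter_cong) auto
  have all: "cntR A y lo hi \<le> f" if y: "y \<in> set (map (nth A) [lo..<hi])" for y
  proof -
    obtain q where q: "lo \<le> q" "q < hi" "A!q = y" using y by auto
    show ?thesis
    proof (cases "\<exists>q'. q' \<in> {lo..<pe} \<union> {se..<hi} \<and> A!q' = y")
      case True
      then show ?thesis using I by (auto simp: Inv_def cf)
    next
      case False
      then have z1: "cntR A y lo pe = 0" "cntR A y se hi = 0" by (auto intro!: cntR_zero)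
      have "cntR A y lo hi = cntR A y lo pe + cntR A y pe se + cntR A y se hi"
        using cntR_split[of lo pe hi A y] cntR_split[of pe se hi A y] o by simp
      then show ?thesis using z1 I by (simp add: Inv_def cf)
    qed
  qed
  have lo_in: "A!lo \<in> set (map (nth A) [lo..<hi])" using o by auto
  have "cntR A (A!lo) 0 lo < cntR A (A!lo) 0 hi" using cntR_occ[of A lo "A!lo" hi] o by simp
  moreover have "cntR A (A!lo) 0 hi = cntR A (A!lo) 0 lo + cntR A (A!lo) lo hi"
    using cntR_split[of 0 lo hi A "A!lo"] o by simp
  ultimately have "1 \<le> cntR A (A!lo) lo hi" by linarith
  then have f1: "1 \<le> f" using all[OF lo_in] by linarith
  have fc: "f \<le> cntR A c lo hi" using I by (simp add: Inv_def cf)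
  have cin: "c \<in># mset (map (nth A) [lo..<hi])"
    using f1 fc cnt[of c] by (simp only: count_greater_zero_iff[symmetric])
  have "\<forall>x \<in># mset (map (nth A) [lo..<hi]). count (mset (map (nth A) [lo..<hi])) x \<le> count (mset (map (nth A) [lo..<hi])) c"
  proof
    fix x assume "x \<in># mset (map (nth A) [lo..<hi])"
    then have "x \<in> set (map (nth A) [lo..<hi])" by (simp only: set_mset_mset)
    then show "count (mset (map (nth A) [lo..<hi])) x \<le> count (mset (map (nth A) [lo..<hi])) c"
      using all fc cnt by (metis le_trans)
  qed
  then show ?thesis unfolding is_mode_def cf using cin by simp
qed


definition LS :: "(nat \<Rightarrow> nat) \<Rightarrow> (nat \<Rightarrow> nat) \<Rightarrow> nat \<Rightarrow> nat \<Rightarrow> nat \<Rightarrow> state \<Rightarrow> bool" where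
  "LS M R k f c s \<longleftrightarrow> pc s = 42 \<and> mem s = M \<and> regs s 2 = k \<and> regs s 5 = f \<and> regs s 0 = c \<and>
     (\<forall>r. r \<notin> {0,2,5,9,10,11} \<longrightarrow> regs s r = R r)"

definition DS :: "nat \<Rightarrow> nat list \<Rightarrow> (nat \<Rightarrow> nat) \<Rightarrow> (nat \<Rightarrow> nat) \<Rightarrow> nat \<Rightarrow> bool" where
  "DS w B M R q \<longleftrightarrow> R 12 = 1 \<and> R 3 \<le> R 4 \<and> R 4 \<le> length B \<and>
     (\<forall>k<length B. M (R 6 + k) = q + posn B k \<and> M (R 7 + k) = q + endp B k \<and> M (R 8 + k) = B!k) \<and>
     (\<forall>a<length B. M (q + a) = qa B a) \<and> (\<forall>a. M a < 2^w) \<and>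
     R 6 + length B < 2^w \<and> R 7 + length B < 2^w \<and> R 8 + length B < 2^w \<and> q + 2 * length B < 2^w"


lemma LS_regs: assumes "LS M R k f c s"
  shows "pc s = 42" "mem s = M" "regs s 2 = k" "regs s 5 = f" "regs s 0 = c"
    "regs s 3 = R 3" "regs s 4 = R 4" "regs s 6 = R 6" "regs s 7 = R 7" "regs s 8 = R 8" "regs s 12 = R 12"
  using assms by (auto simp: LS_def)

lemmas sim_simps = run_num run_one run_Suc step_eq prog_at prog_len exec_instr.simps setr_def

definition EXS :: "(nat \<Rightarrow> nat) \<Rightarrow> (nat \<Rightarrow> nat) \<Rightarrow> nat \<Rightarrow> nat \<Rightarrow> state \<Rightarrow> bool" where
  "EXS M R f c s \<longleftrightarrow> pc s = 60 \<and> mem s = M \<and> regs s 5 = f \<and> regs s 0 = c \<and>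
     (\<forall>r. r \<notin> {0,2,5,9,10,11} \<longrightarrow> regs s r = R r)"

lemma it_exit: assumes L: "LS M R k f c s" and k: "\<not> k < R 3"
  shows "EXS M R f c (run w prog 2 s)"
proof -
  note r = LS_regs[OF L]
  show ?thesis using L r k by (simp add: sim_simps LS_def EXS_def)
qed

lemma it_common: assumes D: "DS w B M R q" and L: "LS M R k f c s" and k: "k < R 3"
  and f: "f \<le> length B"
  shows "k < length B" "k < R 4" "R 4 \<le> length B" "endp B k \<le> length B"
   "M (R 6 + k) = q + posn B k" "M (R 7 + k) = q + endp B k" "M (R 8 + k) = B!k" "R 12 = 1"
   "R 6 + k < 2^w" "R 7 + k < 2^w" "R 8 + k < 2^w" "q + posn B k < 2^w"
    "q + posn B k + f < 2^w" "q + endp B k < 2^w" "\<And>a. M a < 2^w" "B!k < 2^w" "length B < 2^w"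
proof -
  show n: "k < length B" "k < R 4" "R 4 \<le> length B" using D k by (auto simp: DS_def)
  show el: "endp B k \<le> length B" using endp_le n by auto
  show m: "M (R 6 + k) = q + posn B k" "M (R 7 + k) = q + endp B k" "M (R 8 + k) = B!k" "R 12 = 1"
    using D n by (auto simp: DS_def)
  have pl: "posn B k < length B" using posn_lt[OF n(1)] el by linarith
  show w: "R 6 + k < 2^w" "R 7 + k < 2^w" "R 8 + k < 2^w" "q + posn B k < 2^w"
    "q + posn B k + f < 2^w" "q + endp B k < 2^w" "\<And>a. M a < 2^w"
    using D n el f pl by (auto simp: DS_def)
  show "B!k < 2^w" using m w by metis
  show "length B < 2^w" using D by (auto simp: DS_def)
qed

lemma it_inc: assumes D: "DS w B M R q" and L: "LS M R k f c s" and k: "k < R 3"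
  and f: "f < cntR B (B!k) k (R 4)" and fl: "f \<le> length B"
  shows "LS M R k (Suc f) (B!k) (run w prog 16 s)"
proof -
  note r = LS_regs[OF L]
  note c = it_common[OF D L k fl]
  have kt: "posn B k + f < endp B k" "qa B (posn B k + f) < R 4" using keyl[OF c(1,2,3)] f by auto
  have m: "M (q + posn B k + f) = qa B (posn B k + f)"
    using D kt c(4) by (auto simp: DS_def add.assoc)
  have w1: "Suc f < 2^w" using kt c(4) c(17) by linarith
  have w2: "qa B (posn B k + f) < 2^w" using c(15) m by metis
  note w = w1 w2
  show ?thesis
    using L r m w kt c k by (simp add: sim_simps LS_def)
qed

lemma it_fail1: assumes D: "DS w B M R q" and L: "LS M R k f c s" and k: "k < R 3"
  and f: "\<not> posn B k + f < endp B k" and fl: "f \<le> length B"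
  shows "LS M R (Suc k) f c (run w prog 11 s)"
proof -
  note r = LS_regs[OF L]
  note c = it_common[OF D L k fl]
  have w: "Suc k < 2^w" using c(1,17) by linarith
  show ?thesis
    using L r w f c k by (simp add: sim_simps LS_def)
qed

lemma it_fail2: assumes D: "DS w B M R q" and L: "LS M R k f c s" and k: "k < R 3"
  and f: "posn B k + f < endp B k" "\<not> qa B (posn B k + f) < R 4" and fl: "f \<le> length B"
  shows "LS M R (Suc k) f c (run w prog 14 s)"
proof -
  note r = LS_regs[OF L]
  note c = it_common[OF D L k fl]
  have m: "M (q + posn B k + f) = qa B (posn B k + f)"
    using D f c(4) by (auto simp: DS_def add.assoc)
  have w1: "Suc k < 2^w" using c(1,17) by linarith
  have w2: "qa B (posn B k + f) < 2^w" using c(15) m by metis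
  note w = w1 w2
  show ?thesis
    using L r w f c k m by (simp add: sim_simps LS_def)
qed


lemma cntR_le: "cntR B x l h \<le> h - l"
proof -
  have "{q. l \<le> q \<and> q < h \<and> B!q = x} \<subseteq> {l..<h}" by auto
  then show ?thesis unfolding cntR_def by (metis card_atLeastLessThan card_mono finite_atLeastLessThan)
qed

lemma proc_mono: "snd cf \<le> snd (proc B h cf k)"
  by (auto simp: proc_def Let_def)

lemma proc_bound: "h \<le> length B \<Longrightarrow> snd cf \<le> length B \<Longrightarrow> snd (proc B h cf k) \<le> length B"
  using cntR_le[of B "B!k" k h] by (auto simp: proc_def Let_def)

lemma fold_mono: "snd cf \<le> snd (foldl (proc B h) cf ks)"
proof (induction ks arbitrary: cf)
  case (Cons k ks)
  show ?case using order_trans[OF proc_mono Cons.IH] by simp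
qed simp

lemma fold_bound: "h \<le> length B \<Longrightarrow> snd cf \<le> length B \<Longrightarrow> snd (foldl (proc B h) cf ks) \<le> length B"
  by (induction ks arbitrary: cf) (auto simp: proc_bound)

lemma pos_step:
  assumes D: "DS w B M R q" and L: "LS M R k f c s" and k: "k < R 3" and fl: "f \<le> length B"
  shows "\<exists>t. t \<le> 16 * (snd (proc B (R 4) (c,f) k) - f) + 14 \<and>
     LS M R (Suc k) (snd (proc B (R 4) (c,f) k)) (fst (proc B (R 4) (c,f) k)) (run w prog t s)"
  using L fl
proof (induction "cntR B (B!k) k (R 4) - f" arbitrary: f c s rule: less_induct)
  case less
  note c = it_common[OF D less.prems(1) k less.prems(2)]
  show ?case
  proof (cases "f < cntR B (B!k) k (R 4)")
    case True
    have L1: "LS M R k (Suc f) (B!k) (run w prog 16 s)" using it_inc[OF D less.prems(1) k True less.prems(2)] .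
    have vl: "cntR B (B!k) k (R 4) \<le> length B" using cntR_le[of B "B!k" k "R 4"] c(3) by linarith
    have sl: "Suc f \<le> length B" using True vl by linarith
    have lt: "cntR B (B!k) k (R 4) - Suc f < cntR B (B!k) k (R 4) - f" using True by simp
    from less.hyps[OF lt L1 sl] obtain t where
      t: "t \<le> 16 * (snd (proc B (R 4) (B!k, Suc f) k) - Suc f) + 14"
      "LS M R (Suc k) (snd (proc B (R 4) (B!k, Suc f) k)) (fst (proc B (R 4) (B!k, Suc f) k)) (run w prog t (run w prog 16 s))"
      by blast
    have e: "proc B (R 4) (B!k, Suc f) k = proc B (R 4) (c, f) k"
      using True by (auto simp: proc_def Let_def)
    have e2: "snd (proc B (R 4) (c, f) k) = cntR B (B!k) k (R 4)"
      using True by (auto simp: proc_def Let_def)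
    show ?thesis
      apply (rule exI[of _ "16 + t"])
      using t e e2 True by (simp add: run_add)
  next
    case False
    have e: "proc B (R 4) (c, f) k = (c, f)" using False by (auto simp: proc_def Let_def)
    have nt: "\<not> (posn B k + f < endp B k \<and> qa B (posn B k + f) < R 4)"
      using keyl[OF c(1,2,3)] False by auto
    show ?thesis
    proof (cases "posn B k + f < endp B k")
      case True
      with nt have "\<not> qa B (posn B k + f) < R 4" by auto
      from it_fail2[OF D less.prems(1) k True this less.prems(2)] show ?thesis
        by (intro exI[of _ 14]) (simp add: e)
    next
      case False
      from it_fail1[OF D less.prems(1) k False less.prems(2)] show ?thesis
        by (intro exI[of _ 11]) (simp add: e)
    qed
  qed
qed

lemma loop:
  assumes D: "DS w B M R q" and L: "LS M R k f c s" and fl: "f \<le> length B"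
  shows "\<exists>t. t \<le> 16 * ((R 3 - k) + (snd (foldl (proc B (R 4)) (c,f) [k..<R 3]) - f)) + 2 \<and>
     EXS M R (snd (foldl (proc B (R 4)) (c,f) [k..<R 3])) (fst (foldl (proc B (R 4)) (c,f) [k..<R 3])) (run w prog t s)"
  using L fl
proof (induction "R 3 - k" arbitrary: k f c s rule: less_induct)
  case less
  show ?case
  proof (cases "k < R 3")
    case False
    then show ?thesis using it_exit[OF less.prems(1) False] by (intro exI[of _ 2]) simp
  next
    case True
    have h4: "R 4 \<le> length B" using D by (auto simp: DS_def)
    obtain t1 where t1: "t1 \<le> 16 * (snd (proc B (R 4) (c,f) k) - f) + 14"
      "LS M R (Suc k) (snd (proc B (R 4) (c,f) k)) (fst (proc B (R 4) (c,f) k)) (run w prog t1 s)"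
      using pos_step[OF D less.prems(1) True less.prems(2)] by blast
    define cf where "cf = proc B (R 4) (c,f) k"
    have b: "snd cf \<le> length B" using proc_bound[OF h4, of "(c,f)"] less.prems(2) by (simp add: cf_def)
    have "R 3 - Suc k < R 3 - k" using True by simp
    from less.hyps[OF this _ b, of "fst cf" "run w prog t1 s"] t1(2) obtain t2 where
      t2: "t2 \<le> 16 * ((R 3 - Suc k) + (snd (foldl (proc B (R 4)) cf [Suc k..<R 3]) - snd cf)) + 2"
        "EXS M R (snd (foldl (proc B (R 4)) cf [Suc k..<R 3])) (fst (foldl (proc B (R 4)) cf [Suc k..<R 3])) (run w prog t2 (run w prog t1 s))"
      by (auto simp: cf_def)
    have ul: "[k..<R 3] = k # [Suc k..<R 3]" using True by (simp add: upt_conv_Cons)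
    have m1: "f \<le> snd cf" using proc_mono[of "(c,f)"] by (simp add: cf_def)
    have m2: "snd cf \<le> snd (foldl (proc B (R 4)) cf [Suc k..<R 3])" by (rule fold_mono)
    show ?thesis
      apply (rule exI[of _ "t1 + t2"])
      using t1(1) t2 ul m1 m2 True by (simp add: run_add cf_def[symmetric])
  qed
qed




lemma prog_Suc0: "prog ! Suc 0 = Sub 13 0 12" using prog_1 by simp

definition PRE :: "(nat \<Rightarrow> nat) \<Rightarrow> nat list \<Rightarrow> state \<Rightarrow> bool" where
  "PRE M vs s \<longleftrightarrow> pc s = 42 \<and> mem s = M \<and> map (regs s) [0,1,2,3,4,5,6,7,8,12,13,17,25,26,30] = vs"

lemma prelude:
  assumes M: "M 0 = t" "M 1 = W" "M 2 = n" "M 3 = b3" "M 4 = b4" "M 5 = b5" "M 6 = b6" "M 7 = b7"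
    "\<And>a. M a < 2^w" "W < 2^w" "n < 2^w" "b5 < 2^w" "b6 < 2^w" "b7 < 2^w"
  and d: "i - 1 = lo" "lo + t = x1" "x1 - 1 = x2" "x2 div t = bL" "j div t = bR" "bL * t = a" "bR * t = b"
      "bL * W = y" "y + bR = idx" "b3 + idx = ac" "b4 + idx = af"
  and w: "(8::nat) < 2^w" "j < 2^w" "x1 < 2^w" "a < 2^w" "b < 2^w" "y < 2^w" "idx < 2^w" "ac < 2^w" "af < 2^w"
  and w0: "0 < w"
  and pe: "pe = (if a < j then a else j)" and se: "se = (if b < pe then pe else b)"
  shows "\<exists>N\<le>42. PRE M [M ac, j, lo, pe, j, M af, b5, b6, b7, 1, lo, n, se, 0, 0] (run w prog N (query_init M i j))"
proof (cases "a < j")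
  case True
  show ?thesis
  proof (cases "b < a")
    case True2: True
    show ?thesis apply (rule exI[of _ 40])
      using M d w w0 True True2 pe se by (simp add: sim_simps query_init_def prog_Suc0 numeral_2_eq_2[symmetric] PRE_def)
  next
    case False2: False
    show ?thesis apply (rule exI[of _ 39])
      using M d w w0 True False2 pe se by (simp add: sim_simps query_init_def prog_Suc0 numeral_2_eq_2[symmetric] PRE_def)
  qed
next
  case False
  show ?thesis
  proof (cases "b < j")
    case True2: True
    show ?thesis apply (rule exI[of _ 39])
      using M d w w0 False True2 pe se by (simp add: sim_simps query_init_def prog_Suc0 numeral_2_eq_2[symmetric] PRE_def)
  next
    case False2: False
    show ?thesis apply (rule exI[of _ 38])
      using M d w w0 False False2 pe se by (simp add: sim_simps query_init_def prog_Suc0 numeral_2_eq_2[symmetric] PRE_def)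
  qed
qed


lemma mid:
  assumes s: "pc s = 60" "mem s = M" "regs s 26 = 0" "regs s 17 = n" "regs s 1 = hi" "regs s 25 = se"
    "regs s 13 = lo" "regs s 12 = 1" "regs s 30 = 0"
  and M: "M 8 = b8" "M 9 = b9" "M 10 = b10" "b8 < 2^w" "b9 < 2^w" "b10 < 2^w"
  and w: "(16::nat) < 2^w" "0 < w"
  shows "pc (run w prog 12 s) = 42 \<and> mem (run w prog 12 s) = M \<and>
    regs (run w prog 12 s) 0 = regs s 0 \<and> regs (run w prog 12 s) 5 = regs s 5 \<and>
    regs (run w prog 12 s) 2 = n - hi \<and> regs (run w prog 12 s) 3 = n - se \<and>
    regs (run w prog 12 s) 4 = n - lo \<and> regs (run w prog 12 s) 6 = b8 \<and>
    regs (run w prog 12 s) 7 = b9 \<and> regs (run w prog 12 s) 8 = b10 \<and>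
    regs (run w prog 12 s) 12 = 1 \<and> regs (run w prog 12 s) 26 = 1"
  using s M w by (simp add: sim_simps)

lemma fin:
  assumes "pc s = 60" "regs s 26 = 1"
  shows "halted prog (run w prog 1 s) \<and> regs (run w prog 1 s) 0 = regs s 0"
  using assms by (simp add: sim_simps halted_def)




definition blk :: "real \<Rightarrow> nat \<Rightarrow> nat" where "blk e n = max 1 (nat \<lceil>real n powr e\<rceil>)"
definition Wd :: "real \<Rightarrow> nat \<Rightarrow> nat" where "Wd e n = (n + blk e n - 1) div blk e n + 1"
definition B1 :: "real \<Rightarrow> nat \<Rightarrow> nat" where "B1 e n = 11 + 2 * (Wd e n * Wd e n)"
definition B2 :: "real \<Rightarrow> nat \<Rightarrow> nat" where "B2 e n = B1 e n + 4 * n"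
definition maxc :: "nat list \<Rightarrow> nat \<Rightarrow> nat \<Rightarrow> nat" where
  "maxc A l h = Max (insert 0 ((\<lambda>q. cntR A (A!q) l h) ` {l..<h}))"
definition modec :: "nat list \<Rightarrow> nat \<Rightarrow> nat \<Rightarrow> nat" where
  "modec A l h = A ! (SOME q. l \<le> q \<and> q < h \<and> cntR A (A!q) l h = maxc A l h)"
definition tabC :: "real \<Rightarrow> nat list \<Rightarrow> nat \<Rightarrow> nat \<Rightarrow> nat" where
  "tabC e A bL bR = (if bL * blk e (length A) < min (bR * blk e (length A)) (length A)
     then modec A (bL * blk e (length A)) (min (bR * blk e (length A)) (length A)) else 0)"
definition tabF :: "real \<Rightarrow> nat list \<Rightarrow> nat \<Rightarrow> nat \<Rightarrow> nat" where
  "tabF e A bL bR = maxc A (bL * blk e (length A)) (min (bR * blk e (length A)) (length A))"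
definition smem :: "nat list \<Rightarrow> nat \<Rightarrow> nat \<Rightarrow> nat" where
  "smem B b d = (if d < length B then b + 3 * length B + posn B d
     else if d < 2 * length B then b + 3 * length B + endp B (d - length B)
     else if d < 3 * length B then B ! (d - 2 * length B)
     else if d < 4 * length B then qa B (d - 3 * length B) else 0)"
definition encM :: "real \<Rightarrow> nat list \<Rightarrow> nat \<Rightarrow> nat" where
  "encM e A a = (let n = length A; W = Wd e n; b1 = B1 e n; b2 = B2 e n in
     if a < 11 then [blk e n, W, n, 11, 11 + W * W, b1, b1 + n, b1 + 2 * n, b2, b2 + n, b2 + 2 * n] ! a
     else if a < 11 + W * W then tabC e A ((a - 11) div W) ((a - 11) mod W)
     else if a < 11 + 2 * (W * W) then tabF e A ((a - 11 - W * W) div W) ((a - 11 - W * W) mod W)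
     else if a < b2 then smem A b1 (a - b1)
     else if a < b2 + 4 * n then smem (rev A) b2 (a - b2) else 0)"

lemma enc_hdr:
  "encM e A 0 = blk e (length A)" "encM e A 1 = Wd e (length A)" "encM e A 2 = length A"
  "encM e A 3 = 11" "encM e A 4 = 11 + Wd e (length A) * Wd e (length A)"
  "encM e A 5 = B1 e (length A)" "encM e A 6 = B1 e (length A) + length A"
  "encM e A 7 = B1 e (length A) + 2 * length A" "encM e A 8 = B2 e (length A)"
  "encM e A 9 = B2 e (length A) + length A" "encM e A 10 = B2 e (length A) + 2 * length A"
  by (simp_all add: encM_def Let_def)

lemma idx_lt: assumes "bL < W" "bR < (W::nat)" shows "bL * W + bR < W * W"
proof -
  have "bL * W + bR < bL * W + W" using assms(2) by linarith
  also have "\<dots> = Suc bL * W" by simp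
  also have "\<dots> \<le> W * W" using assms(1) by (intro mult_le_mono1) simp
  finally show ?thesis .
qed

lemma enc_C: assumes "bL < Wd e (length A)" "bR < Wd e (length A)"
  shows "encM e A (11 + (bL * Wd e (length A) + bR)) = tabC e A bL bR"
proof -
  let ?W = "Wd e (length A)"
  have "bL * ?W + bR < ?W * ?W" using idx_lt assms by blast
  moreover have "(bL * ?W + bR) div ?W = bL" "(bL * ?W + bR) mod ?W = bR" using assms by auto
  ultimately show ?thesis by (simp add: encM_def Let_def)
qed

lemma enc_F: assumes "bL < Wd e (length A)" "bR < Wd e (length A)"
  shows "encM e A (11 + Wd e (length A) * Wd e (length A) + (bL * Wd e (length A) + bR)) = tabF e A bL bR"
proof -
  let ?W = "Wd e (length A)"
  have "bL * ?W + bR < ?W * ?W" using idx_lt assms by blast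
  moreover have "(bL * ?W + bR) div ?W = bL" "(bL * ?W + bR) mod ?W = bR" using assms by auto
  ultimately show ?thesis by (simp add: encM_def Let_def)
qed

lemma enc_S1: assumes "k < length A"
  shows "encM e A (B1 e (length A) + k) = B1 e (length A) + 3 * length A + posn A k"
    "encM e A (B1 e (length A) + length A + k) = B1 e (length A) + 3 * length A + endp A k"
    "encM e A (B1 e (length A) + 2 * length A + k) = A ! k"
    "encM e A (B1 e (length A) + 3 * length A + k) = qa A k"
  using assms by (simp_all add: encM_def Let_def smem_def B2_def B1_def)

lemma enc_S2: assumes "k < length A"
  shows "encM e A (B2 e (length A) + k) = B2 e (length A) + 3 * length A + posn (rev A) k"
    "encM e A (B2 e (length A) + length A + k) = B2 e (length A) + 3 * length A + endp (rev A) k"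
    "encM e A (B2 e (length A) + 2 * length A + k) = rev A ! k"
    "encM e A (B2 e (length A) + 3 * length A + k) = qa (rev A) k"
  using assms by (simp_all add: encM_def Let_def smem_def B2_def B1_def)

lemma enc_zero: "B2 e (length A) + 4 * length A \<le> a \<Longrightarrow> encM e A a = 0"
  by (simp add: encM_def Let_def B2_def B1_def)

lemma maxc_ge: "cntR A y l h \<le> maxc A l h"
proof (cases "cntR A y l h = 0")
  case False
  then obtain q where q: "l \<le> q" "q < h" "A!q = y" unfolding cntR_def by (metis (mono_tags, lifting) card.empty empty_Collect_eq)
  then show ?thesis unfolding maxc_def by (intro Max_ge) auto
qed simp

lemma maxc_le: "maxc A l h \<le> h - l"
  unfolding maxc_def using cntR_le by (intro Max.boundedI) auto

lemma maxc_empty: "h \<le> l \<Longrightarrow> maxc A l h = 0"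
  unfolding maxc_def by simp

lemma modec_spec: assumes "l < h"
  shows "\<exists>q. l \<le> q \<and> q < h \<and> modec A l h = A!q \<and> cntR A (A!q) l h = maxc A l h"
proof -
  let ?S = "(\<lambda>q. cntR A (A!q) l h) ` {l..<h}"
  have ne: "?S \<noteq> {}" using assms by auto
  have fin: "finite ?S" by simp
  have "Max ?S \<in> ?S" using Max_in[OF fin ne] .
  moreover have "maxc A l h = Max ?S"
  proof -
    have "Max ?S \<ge> 0" by simp
    then show ?thesis unfolding maxc_def using fin ne by (simp add: Max_insert max_def)
  qed
  ultimately have ex: "\<exists>q. l \<le> q \<and> q < h \<and> cntR A (A!q) l h = maxc A l h" by force
  show ?thesis using someI_ex[OF ex] unfolding modec_def by blast
qed




lemma nbits_gt: "x < 2 ^ nbits x"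
  unfolding nbits_def by (rule LeastI[of _ x]) (simp add: less_exp)

lemma nbits_ge4: assumes "2 \<le> x" shows "4 \<le> (2::nat) ^ nbits x"
proof -
  have "\<not> nbits x \<le> 1"
  proof
    assume "nbits x \<le> 1"
    then have "(2::nat) ^ nbits x \<le> 2 ^ 1" by (intro power_increasing) auto
    then show False using nbits_gt[of x] assms by simp
  qed
  then have "(2::nat) ^ 2 \<le> 2 ^ nbits x" by (intro power_increasing) auto
  then show ?thesis by simp
qed

lemma wpow: "(2::nat) ^ wordsize n u = (2 ^ nbits (n + u)) ^ 3"
  by (simp add: wordsize_def power_mult[symmetric] mult.commute)

lemma wbound: assumes "1 \<le> n" "1 \<le> u" "W \<le> n + 1" "n + u < X" "4 \<le> X"
  shows "u + 12 + 2 * (W * W) + 9 * n < (X::nat) ^ 3"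
proof -
  obtain Y where Y: "X = Suc Y" using assms(5) by (cases X) auto
  have y3: "3 \<le> Y" using assms Y by simp
  have wy: "W \<le> Y" using assms Y by simp
  have nY: "n + 1 \<le> Y" "u \<le> Y" using assms Y by auto
  have "W * W \<le> Y * Y" using wy by (intro mult_le_mono) auto
  moreover have "3 * (Y * Y) \<le> Y * Y * Y" using y3 by simp
  moreover have "3 * Y \<le> Y * Y" using y3 by simp
  moreover have "X ^ 3 = Y * Y * Y + 3 * (Y * Y) + 3 * Y + 1" by (simp add: Y power3_eq_cube algebra_simps)
  ultimately show ?thesis using nY by linarith
qed

context
  fixes e :: real and n :: nat
  assumes e: "0 \<le> e" "e \<le> 1/2" and n: "1 \<le> n"
begin

lemma P_ge1: "1 \<le> real n powr e" using n e by (simp add: ge_one_powr_ge_zero)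
lemma P_le: "real n powr e \<le> real n"
proof -
  have "real n powr e \<le> real n powr 1" using n e by (intro powr_mono) auto
  then show ?thesis using n by simp
qed

lemma blk_ge1: "1 \<le> blk e n" by (simp add: blk_def)
lemma blk_ge: "real n powr e \<le> real (blk e n)"
proof -
  have "real n powr e \<le> real (nat \<lceil>real n powr e\<rceil>)" by (rule real_nat_ceiling_ge)
  also have "\<dots> \<le> real (blk e n)" unfolding blk_def by simp
  finally show ?thesis .
qed
lemma blk_le: "real (blk e n) \<le> 2 * real n powr e"
proof -
  have c0: "0 \<le> \<lceil>real n powr e\<rceil>" using P_ge1 by simp
  have "real (nat \<lceil>real n powr e\<rceil>) = of_int \<lceil>real n powr e\<rceil>" using c0 by simp
  also have "\<dots> \<le> real n powr e + 1" by (rule of_int_ceiling_le_add_one)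
  finally have b: "real (nat \<lceil>real n powr e\<rceil>) \<le> real n powr e + 1" .
  have "blk e n = 1 \<or> blk e n = nat \<lceil>real n powr e\<rceil>" unfolding blk_def by (simp add: max_def)
  then show ?thesis
  proof
    assume "blk e n = 1" then show ?thesis using P_ge1 by simp
  next
    assume "blk e n = nat \<lceil>real n powr e\<rceil>"
    then have "real (blk e n) \<le> real n powr e + 1" using b by simp
    then show ?thesis using P_ge1 by linarith
  qed
qed
lemma blk_le_n: "blk e n \<le> n"
proof -
  have "\<lceil>real n powr e\<rceil> \<le> \<lceil>real n\<rceil>" by (rule ceiling_mono[OF P_le])
  then have "\<lceil>real n powr e\<rceil> \<le> int n" by simp
  then show ?thesis unfolding blk_def using n P_le by simp
qed

lemma Wd_le: "Wd e n \<le> n + 1"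
proof -
  have t: "1 \<le> blk e n" using blk_ge1 .
  have "(n + blk e n - 1) div blk e n \<le> n"
  proof -
    have "n \<le> n * blk e n" using t by simp
    moreover have "(n + 1) * blk e n = n * blk e n + blk e n" by simp
    ultimately have "n + blk e n - 1 < (n + 1) * blk e n" using t n by linarith
    then have "(n + blk e n - 1) div blk e n < n + 1" by (rule less_mult_imp_div_less)
    then show ?thesis by simp
  qed
  then show ?thesis by (simp add: Wd_def)
qed

lemma Wd_real: "real (Wd e n) \<le> 3 * real n powr (1 - e)"
proof -
  define t where "t = blk e n"
  have t1: "1 \<le> t" using blk_ge1 t_def by simp
  have tp: "real n powr e \<le> real t" using blk_ge t_def by simp
  have "(n + t - 1) div t * t \<le> n + t - 1" by (rule div_times_less_eq_dividend)
  then have "real ((n + t - 1) div t) * real t \<le> real (n + t - 1)" by (metis of_nat_le_iff of_nat_mult)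
  then have "real ((n + t - 1) div t) \<le> real (n + t - 1) / real t" using t1 by (simp add: pos_le_divide_eq)
  also have "\<dots> \<le> (real n + real t) / real t" using t1 by (intro divide_right_mono) auto
  also have "\<dots> = real n / real t + 1" using t1 by (simp add: field_simps)
  finally have d1: "real ((n + t - 1) div t) \<le> real n / real t + 1" .
  have "real n / real t \<le> real n / real n powr e"
    using tp P_ge1 n by (intro divide_left_mono mult_pos_pos) auto
  also have "real n / real n powr e = real n powr (1 - e)" using n by (simp add: powr_diff)
  finally have d: "real ((n + t - 1) div t) \<le> real n powr (1 - e) + 1" using d1 by linarith
  have "1 \<le> real n powr (1 - e)" using n e by (simp add: ge_one_powr_ge_zero)
  then show ?thesis using d by (simp add: Wd_def t_def[symmetric])
qed

lemma Wd_sq: "real (Wd e n * Wd e n) \<le> 9 * real n powr (2 - 2 * e)"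
proof -
  have "real (Wd e n * Wd e n) = real (Wd e n) * real (Wd e n)" by simp
  also have "\<dots> \<le> (3 * real n powr (1 - e)) * (3 * real n powr (1 - e))"
    using Wd_real by (intro mult_mono) auto
  also have "\<dots> = 9 * (real n powr (1 - e) * real n powr (1 - e))" by simp
  also have "real n powr (1 - e) * real n powr (1 - e) = real n powr (2 - 2 * e)"
    by (simp add: powr_add[symmetric])
  finally show ?thesis by simp
qed

lemma n_le_Q: "real n \<le> real n powr (2 - 2 * e)"
proof -
  have "real n powr 1 \<le> real n powr (2 - 2 * e)" using n e by (intro powr_mono) auto
  then show ?thesis using n by simp
qed

lemma space_bound: "real (B2 e n + 4 * n) \<le> 37 * real n powr (2 - 2 * e)"
proof -
  have q1: "1 \<le> real n powr (2 - 2 * e)" using n e by (simp add: ge_one_powr_ge_zero)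
  have "real (B2 e n + 4 * n) = 11 + 2 * real (Wd e n * Wd e n) + 8 * real n"
    by (simp add: B2_def B1_def)
  then show ?thesis using Wd_sq n_le_Q q1 by linarith
qed

lemma time_bound: "real (59 + 64 * blk e n) \<le> 187 * real n powr e"
  using blk_le P_ge1 by simp

end




lemma qa_lt: "0 < length B \<Longrightarrow> qa B a < length B"
proof -
  assume p: "0 < length B"
  show ?thesis
  proof (cases "\<exists>q. q < length B \<and> posn B q = a")
    case True
    then have "(SOME q. q < length B \<and> posn B q = a) < length B" by (metis (mono_tags, lifting) someI_ex)
    then show ?thesis using True by (simp add: qa_def)
  next
    case False then show ?thesis using p by (auto simp: qa_def)
  qed
qed

lemma enc_le:
  assumes e: "0 \<le> e" "e \<le> 1/2" and A: "1 \<le> length A" "set A \<subseteq> {..<u}"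
  shows "encM e A a \<le> u + B2 e (length A) + 4 * length A"
proof -
  define n where "n = length A"
  define W where "W = Wd e n"
  have n1: "1 \<le> n" using A n_def by simp
  have tn: "blk e n \<le> n" using blk_le_n[OF e n1] .
  have Wn: "W \<le> n + 1" using Wd_le[OF e n1] W_def by simp
  have b2: "B2 e n = B1 e n + 4 * n" "B1 e n = 11 + 2 * (W * W)" by (simp_all add: B2_def B1_def W_def)
  have Au: "\<And>k. k < n \<Longrightarrow> A ! k < u" using A n_def by (meson lessThan_iff nth_mem subsetD)
  have Ru: "\<And>k. k < n \<Longrightarrow> rev A ! k < u" using A n_def by (metis lessThan_iff length_rev nth_mem set_rev subsetD)
  let ?bd = "u + B2 e n + 4 * n"
  have WW: "W \<le> W * W" by (cases W) auto
  have hdr: "\<forall>x\<in>set [blk e n, W, n, 11, 11 + W * W, B1 e n, B1 e n + n, B1 e n + 2 * n, B2 e n, B2 e n + n, B2 e n + 2 * n]. x \<le> ?bd"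
    unfolding list.set ball_simps using tn b2 WW by (intro conjI TrueI; linarith)
  have tC: "tabC e A x y \<le> ?bd" for x y
  proof (cases "x * blk e (length A) < min (y * blk e (length A)) (length A)")
    case True
    then obtain q where q: "q < min (y * blk e (length A)) (length A)" "modec A (x * blk e (length A)) (min (y * blk e (length A)) (length A)) = A!q"
      using modec_spec by blast
    then have "A ! q < u" using Au n_def by simp
    then show ?thesis using True q by (simp add: tabC_def)
  next
    case False then show ?thesis unfolding tabC_def by (simp only: if_False)
  qed
  have tF: "tabF e A x y \<le> ?bd" for x y
    unfolding tabF_def using maxc_le[of A "x * blk e (length A)" "min (y * blk e (length A)) (length A)"] n_def by linarith
  have sA: "smem A (B1 e n) d \<le> ?bd" for d
  proof -
    consider "d < n" | "n \<le> d" "d < 2 * n" | "2 * n \<le> d" "d < 3 * n" | "3 * n \<le> d" "d < 4 * n" | "4 * n \<le> d" by linarith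
    then show ?thesis
    proof cases
      case 1 then show ?thesis using posn_lt[of d A] endp_le[of d A] b2 by (simp add: smem_def n_def[symmetric])
    next
      case 2
      have "d - n < length A" using 2 n_def by linarith
      then have "endp A (d - n) \<le> length A" by (rule endp_le)
      then have "endp A (d - n) \<le> n" using n_def by simp
      then show ?thesis using 2 b2 by (simp add: smem_def n_def[symmetric])
    next
      case 3
      have "d - 2 * n < n" using 3 by linarith
      then have "A ! (d - 2 * n) < u" by (rule Au)
      then show ?thesis using 3 b2 by (simp add: smem_def n_def[symmetric])
    next
      case 4
      have "qa A (d - 3 * n) < length A" by (rule qa_lt) (use n1 n_def in linarith)
      then have "qa A (d - 3 * n) < n" using n_def by simp
      then show ?thesis using 4 b2 by (simp add: smem_def n_def[symmetric])
    next
      case 5 then show ?thesis by (simp add: smem_def n_def[symmetric])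
    qed
  qed
  have sR: "smem (rev A) (B2 e n) d \<le> ?bd" for d
  proof -
    consider "d < n" | "n \<le> d" "d < 2 * n" | "2 * n \<le> d" "d < 3 * n" | "3 * n \<le> d" "d < 4 * n" | "4 * n \<le> d" by linarith
    then show ?thesis
    proof cases
      case 1 then show ?thesis using posn_lt[of d "rev A"] endp_le[of d "rev A"] by (simp add: smem_def n_def[symmetric])
    next
      case 2
      have "d - n < length (rev A)" using 2 n_def by simp
      then have "endp (rev A) (d - n) \<le> length (rev A)" by (rule endp_le)
      then have "endp (rev A) (d - n) \<le> n" using n_def by simp
      then show ?thesis using 2 b2 by (simp add: smem_def n_def[symmetric])
    next
      case 3
      have "d - 2 * n < n" using 3 by linarith
      then have "rev A ! (d - 2 * n) < u" by (rule Ru)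
      then show ?thesis using 3 b2 by (simp add: smem_def n_def[symmetric])
    next
      case 4
      have "qa (rev A) (d - 3 * n) < length (rev A)" by (rule qa_lt) (simp only: length_rev, use n1 n_def in linarith)
      then have "qa (rev A) (d - 3 * n) < n" using n_def by simp
      then show ?thesis using 4 b2 by (simp add: smem_def n_def[symmetric])
    next
      case 5 then show ?thesis by (simp add: smem_def n_def[symmetric])
    qed
  qed
  have E: "encM e A a = (if a < 11 then [blk e n, W, n, 11, 11 + W * W, B1 e n, B1 e n + n, B1 e n + 2 * n, B2 e n, B2 e n + n, B2 e n + 2 * n] ! a
     else if a < 11 + W * W then tabC e A ((a - 11) div W) ((a - 11) mod W)
     else if a < 11 + 2 * (W * W) then tabF e A ((a - 11 - W * W) div W) ((a - 11 - W * W) mod W)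
     else if a < B2 e n then smem A (B1 e n) (a - B1 e n)
     else if a < B2 e n + 4 * n then smem (rev A) (B2 e n) (a - B2 e n) else 0)"
    unfolding encM_def Let_def n_def W_def ..
  consider (h) "a < 11" | (c) "\<not> a < 11" "a < 11 + W * W" | (f) "\<not> a < 11 + W * W" "a < 11 + 2 * (W * W)"
    | (s1) "\<not> a < 11 + 2 * (W * W)" "a < B2 e n" | (s2) "\<not> a < B2 e n" "a < B2 e n + 4 * n"
    | (z) "\<not> a < B2 e n + 4 * n" "\<not> a < 11 + 2 * (W * W)" "\<not> a < 11" "\<not> a < 11 + W * W" "\<not> a < B2 e n"
    by linarith
  then have "encM e A a \<le> ?bd"
  proof cases
    case h
    then have "encM e A a = [blk e n, W, n, 11, 11 + W * W, B1 e n, B1 e n + n, B1 e n + 2 * n, B2 e n, B2 e n + n, B2 e n + 2 * n] ! a"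
      using E by simp
    moreover have "[blk e n, W, n, 11, 11 + W * W, B1 e n, B1 e n + n, B1 e n + 2 * n, B2 e n, B2 e n + n, B2 e n + 2 * n] ! a
        \<in> set [blk e n, W, n, 11, 11 + W * W, B1 e n, B1 e n + n, B1 e n + 2 * n, B2 e n, B2 e n + n, B2 e n + 2 * n]"
      by (rule nth_mem) (use h in simp)
    then have "[blk e n, W, n, 11, 11 + W * W, B1 e n, B1 e n + n, B1 e n + 2 * n, B2 e n, B2 e n + n, B2 e n + 2 * n] ! a \<le> ?bd"
      by (rule bspec[OF hdr])
    ultimately show ?thesis by simp
  next
    case c then show ?thesis using E tC by simp
  next
    case f then show ?thesis using E tF by simp
  next
    case s1 then show ?thesis using E sA by simp
  next
    case s2 then show ?thesis using E sR b2 by simp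
  next
    case z then show ?thesis using E by simp
  qed
  then show ?thesis by (simp add: n_def)
qed

lemma subarray_eq: assumes "1 \<le> i" "j \<le> length A"
  shows "subarray A i j = mset (map (nth A) [i - 1..<j])"
proof -
  have "take (Suc j - i) (drop (i - 1) A) = map (nth A) [i - 1..<j]"
    by (rule nth_equalityI) (use assms in auto)
  then show ?thesis by (simp add: subarray_def)
qed




lemma wfacts:
  assumes e: "0 \<le> e" "e \<le> 1/2" and A: "1 \<le> length A" "set A \<subseteq> {..<u}"
  shows "1 \<le> u" "u + 12 + 2 * (Wd e (length A) * Wd e (length A)) + 9 * length A < 2 ^ wordsize (length A) u"
    "0 < wordsize (length A) u"
proof -
  have "A ! 0 \<in> set A" using A(1) by (intro nth_mem) linarith
  then show u1: "1 \<le> u" using A by fastforce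
  have n1: "1 \<le> length A" using A by simp
  have "length A + u < 2 ^ nbits (length A + u)" by (rule nbits_gt)
  moreover have "4 \<le> (2::nat) ^ nbits (length A + u)" using n1 u1 by (intro nbits_ge4) simp
  ultimately show wb: "u + 12 + 2 * (Wd e (length A) * Wd e (length A)) + 9 * length A < 2 ^ wordsize (length A) u"
    unfolding wpow using wbound[OF n1 u1 Wd_le[OF e n1]] by blast
  show "0 < wordsize (length A) u"
  proof (rule ccontr)
    assume "\<not> 0 < wordsize (length A) u"
    then have "(2::nat) ^ wordsize (length A) u = 1" by simp
    then show False using wb by simp
  qed
qed

lemma mem_part:
  assumes e: "0 \<le> e" "e \<le> 1/2" and A: "1 \<le> length A" "set A \<subseteq> {..<u}"
  shows "\<exists>S::nat. real S \<le> 200 * real (length A) powr (2 - 2 * e) \<and>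
                    (\<forall>a \<ge> S. encM e A a = 0) \<and> (\<forall>a. encM e A a < 2 ^ wordsize (length A) u)"
proof (intro exI[of _ "B2 e (length A) + 4 * length A"] conjI allI impI)
  have n1: "1 \<le> length A" using A by simp
  show "real (B2 e (length A) + 4 * length A) \<le> 200 * real (length A) powr (2 - 2 * e)"
    using space_bound[OF e n1] by simp
  show "encM e A a = 0" if "B2 e (length A) + 4 * length A \<le> a" for a using enc_zero that by blast
  show "encM e A a < 2 ^ wordsize (length A) u" for a
  proof -
    have "encM e A a \<le> u + B2 e (length A) + 4 * length A" by (rule enc_le[OF e A])
    moreover have "B2 e (length A) = 11 + 2 * (Wd e (length A) * Wd e (length A)) + 4 * length A"
      by (simp add: B2_def B1_def)
    ultimately show ?thesis using wfacts(2)[OF e A] by linarith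
  qed
qed


lemma main_query:
  assumes e: "0 \<le> e" "e \<le> 1/2" and A: "1 \<le> length A" "set A \<subseteq> {..<u}"
    and ij: "1 \<le> i" "i \<le> j" "j \<le> length A"
  shows "\<exists>T. real T \<le> 200 * real (length A) powr e \<and>
     halted prog (run (wordsize (length A) u) prog T (query_init (encM e A) i j)) \<and>
     is_mode (subarray A i j) (regs (run (wordsize (length A) u) prog T (query_init (encM e A) i j)) 0)"
proof -
  define n where "n = length A"
  define w where "w = wordsize n u"
  define M where "M = encM e A"
  define t where "t = blk e n"
  define W where "W = Wd e n"
  define b1 where "b1 = B1 e n"
  define b2 where "b2 = B2 e n"
  have n1: "1 \<le> n" using A n_def by simp
  have u1: "1 \<le> u" using wfacts(1)[OF e A] .
  have wb: "u + 12 + 2 * (W * W) + 9 * n < 2 ^ w" using wfacts(2)[OF e A] by (simp add: n_def W_def w_def)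
  have w0: "0 < w" using wfacts(3)[OF e A] by (simp add: n_def w_def)
  have t1: "1 \<le> t" using blk_ge1[OF e n1] t_def by simp
  have tn: "t \<le> n" using blk_le_n[OF e n1] t_def by simp
  have Wn: "W \<le> n + 1" using Wd_le[OF e n1] W_def by simp
  have Wt: "W = (n + t - 1) div t + 1" by (simp add: W_def Wd_def t_def)
  have b1d: "b1 = 11 + 2 * (W * W)" and b2d: "b2 = b1 + 4 * n" by (simp_all add: b1_def b2_def B1_def B2_def W_def)
  have WW: "W \<le> W * W" by (cases W) auto
  have Mlt: "M a < 2 ^ w" for a
  proof -
    have "M a \<le> u + b2 + 4 * n" unfolding M_def b2_def n_def by (rule enc_le[OF e A])
    then show ?thesis using wb b1d b2d by linarith
  qed
  define lo where "lo = i - 1"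
  define x1 where "x1 = lo + t"
  define x2 where "x2 = x1 - 1"
  define bL where "bL = x2 div t"
  define bR where "bR = j div t"
  define a where "a = bL * t"
  define b where "b = bR * t"
  define y where "y = bL * W"
  define idx where "idx = y + bR"
  define ac where "ac = 11 + idx"
  define af where "af = 11 + W * W + idx"
  define pe where "pe = (if a < j then a else j)"
  define se where "se = (if b < pe then pe else b)"
  have lohi: "lo < j" "j \<le> n" using ij by (simp_all add: lo_def n_def)
  have a_lo: "lo \<le> a"
  proof -
    have "x2 div t * t + x2 mod t = x2" by simp
    moreover have "x2 mod t < t" using t1 by simp
    ultimately show ?thesis unfolding a_def bL_def x2_def x1_def using t1 by linarith
  qed
  have a_hi: "a \<le> x2" unfolding a_def bL_def by (rule div_times_less_eq_dividend)
  have b_hi: "b \<le> j" unfolding b_def bR_def by (rule div_times_less_eq_dividend)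
  have b_lo: "j < b + t"
  proof -
    have "j div t * t + j mod t = j" by simp
    moreover have "j mod t < t" using t1 by simp
    ultimately show ?thesis unfolding b_def bR_def by linarith
  qed
  have bLW: "bL < W"
  proof -
    have "x2 \<le> n + t - 1" using lohi unfolding x2_def x1_def by linarith
    then have "bL \<le> (n + t - 1) div t" unfolding bL_def by (rule div_le_mono)
    then show ?thesis using Wt by linarith
  qed
  have bRW: "bR < W"
  proof -
    have "j \<le> n + t - 1" using lohi t1 by linarith
    then have "bR \<le> (n + t - 1) div t" unfolding bR_def by (rule div_le_mono)
    then show ?thesis using Wt by linarith
  qed
  have idxW: "idx < W * W" unfolding idx_def y_def using idx_lt[OF bLW bRW] .
  have ord: "lo \<le> pe" "pe \<le> se" "se \<le> j" "pe - lo < t" "j - se < t"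
    using a_lo a_hi b_hi b_lo lohi t1 unfolding pe_def se_def x2_def x1_def by auto
  have "x1 \<le> 2 * n" using tn lohi unfolding x1_def by linarith
  have wfs: "(8::nat) < 2^w" "j < 2^w" "x1 < 2^w" "a < 2^w" "b < 2^w" "y < 2^w" "idx < 2^w" "ac < 2^w" "af < 2^w"
    "W < 2^w" "n < 2^w" "b1 < 2^w" "b1 + n < 2^w" "b1 + 2 * n < 2^w"
    "b2 < 2^w" "b2 + n < 2^w" "b2 + 2 * n < 2^w" "(16::nat) < 2^w"
    using wb \<open>x1 \<le> 2 * n\<close> a_hi lohi b_hi idxW WW n1 u1 unfolding ac_def af_def idx_def x2_def b1d b2d
    by linarith+
  have Mh: "M 0 = t" "M 1 = W" "M 2 = n" "M 3 = 11" "M 4 = 11 + W * W" "M 5 = b1" "M 6 = b1 + n" "M 7 = b1 + 2 * n"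
    "M 8 = b2" "M 9 = b2 + n" "M 10 = b2 + 2 * n"
    using enc_hdr[of e A] by (simp_all add: M_def t_def W_def n_def b1_def b2_def)
  have Mac: "M ac = tabC e A bL bR" using enc_C[of bL e A bR] bLW bRW
    by (simp add: M_def ac_def idx_def y_def W_def n_def)
  have Maf: "M af = tabF e A bL bR" using enc_F[of bL e A bR] bLW bRW
    by (simp add: M_def af_def idx_def y_def W_def n_def)
  obtain N0 where N0: "N0 \<le> 42"
    "PRE M [M ac, j, lo, pe, j, M af, b1, b1 + n, b1 + 2 * n, 1, lo, n, se, 0, 0] (run w prog N0 (query_init M i j))"
    using prelude[OF Mh(1-8) Mlt wfs(10,11,12,13,14) lo_def[symmetric] x1_def[symmetric] x2_def[symmetric]
        bL_def[symmetric] bR_def[symmetric] a_def[symmetric] b_def[symmetric] y_def[symmetric] idx_def[symmetric]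
        ac_def[symmetric] af_def[symmetric] wfs(1-9) w0 pe_def se_def]
    by blast
  define s0 where "s0 = query_init M i j"
  define s1 where "s1 = run w prog N0 s0"
  define c0 where "c0 = M ac"
  define f0 where "f0 = M af"
  have P1: "pc s1 = 42" "mem s1 = M" "regs s1 0 = c0" "regs s1 1 = j" "regs s1 2 = lo" "regs s1 3 = pe"
    "regs s1 4 = j" "regs s1 5 = f0" "regs s1 6 = b1" "regs s1 7 = b1 + n" "regs s1 8 = b1 + 2 * n"
    "regs s1 12 = 1" "regs s1 13 = lo" "regs s1 17 = n" "regs s1 25 = se" "regs s1 26 = 0" "regs s1 30 = 0"
    using N0(2) by (simp_all add: PRE_def s1_def s0_def c0_def f0_def)
  have abn: "min (bR * t) n = b" using b_hi lohi by (simp add: b_def)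
  have c0v: "c0 = (if a < b then modec A a b else 0)"
    using Mac unfolding c0_def tabC_def by (simp only: n_def[symmetric] t_def[symmetric] a_def[symmetric] abn)
  have f0v: "f0 = maxc A a b"
    using Maf abn unfolding f0_def tabF_def by (simp add: a_def t_def n_def)
  have f0n: "f0 \<le> length A" using maxc_le[of A a b] f0v b_hi lohi n_def by linarith
  have F0: "\<forall>y. cntR A y pe se \<le> f0" and I0: "Inv A lo j pe se {lo..<lo} (c0, f0)"
  proof -
    have "(\<forall>y. cntR A y pe se \<le> f0) \<and> Inv A lo j pe se {lo..<lo} (c0, f0)"
    proof (cases "a < b")
      case True
      then have pa: "pe = a" "se = b" using b_hi by (auto simp: pe_def se_def)
      obtain q where q: "a \<le> q" "q < b" "modec A a b = A!q" "cntR A (A!q) a b = maxc A a b"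
        using modec_spec[OF True, of A] by blast
      have c0q: "c0 = A!q" using c0v True q by simp
      have "cntR A c0 a b \<le> cntR A c0 lo j" using a_lo b_hi by (intro cntR_sub) auto
      then show ?thesis unfolding Inv_def using pa q c0q f0v maxc_ge[of A _ a b] by simp
    next
      case False
      then have f00: "f0 = 0" using f0v maxc_empty by simp
      have "b \<le> pe" using False b_hi by (auto simp: pe_def)
      then have "se = pe" by (simp add: se_def)
      then show ?thesis unfolding Inv_def using f00 by (simp add: cntR_empty)
    qed
    then show "\<forall>y. cntR A y pe se \<le> f0" "Inv A lo j pe se {lo..<lo} (c0, f0)" by auto
  qed
  define R1 where "R1 = regs s1"
  have L1: "LS M R1 lo f0 c0 s1" unfolding LS_def R1_def using P1 by simp
  have D1: "DS w A M R1 (b1 + 3 * n)"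
  proof -
    have m: "M (b1 + k) = b1 + 3 * n + posn A k \<and> M (b1 + n + k) = b1 + 3 * n + endp A k \<and> M (b1 + 2 * n + k) = A ! k"
      if "k < length A" for k using enc_S1[OF that, of e] by (simp add: M_def b1_def n_def)
    have q: "M (b1 + 3 * n + k) = qa A k" if "k < length A" for k using enc_S1[OF that, of e] by (simp add: M_def b1_def n_def)
    show ?thesis unfolding DS_def R1_def using P1 m q Mlt wb lohi b1d ord
      by (simp add: n_def[symmetric])
  qed
  define F1 where "F1 = foldl (proc A j) (c0, f0) [lo..<pe]"
  obtain t1 where t1: "t1 \<le> 16 * ((pe - lo) + (snd F1 - f0)) + 2" "EXS M R1 (snd F1) (fst F1) (run w prog t1 s1)"
    using loop[OF D1 L1 f0n] P1 by (auto simp: R1_def F1_def)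
  define s2 where "s2 = run w prog t1 s1"
  have P2: "pc s2 = 60" "mem s2 = M" "regs s2 5 = snd F1" "regs s2 0 = fst F1"
    "regs s2 26 = 0" "regs s2 17 = n" "regs s2 1 = j" "regs s2 25 = se" "regs s2 13 = lo" "regs s2 12 = 1" "regs s2 30 = 0"
    using t1(2) P1 unfolding EXS_def s2_def[symmetric] R1_def by auto
  define s3 where "s3 = run w prog 12 s2"
  have P3: "pc s3 = 42" "mem s3 = M" "regs s3 0 = fst F1" "regs s3 5 = snd F1" "regs s3 2 = n - j" "regs s3 3 = n - se"
    "regs s3 4 = n - lo" "regs s3 6 = b2" "regs s3 7 = b2 + n" "regs s3 8 = b2 + 2 * n" "regs s3 12 = 1" "regs s3 26 = 1"
    using mid[OF P2(1,2,5,6,7,8,9,10,11) Mh(9,10,11) wfs(15,16,17) wfs(18) w0] P2 unfolding s3_def[symmetric] by auto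
  define R2 where "R2 = regs s3"
  have L2: "LS M R2 (n - j) (snd F1) (fst F1) s3" unfolding LS_def R2_def using P3 by simp
  have D2: "DS w (rev A) M R2 (b2 + 3 * n)"
  proof -
    have m: "M (b2 + k) = b2 + 3 * n + posn (rev A) k \<and> M (b2 + n + k) = b2 + 3 * n + endp (rev A) k \<and> M (b2 + 2 * n + k) = rev A ! k"
      if "k < length A" for k using enc_S2[OF that, of e] by (simp add: M_def b2_def n_def)
    have q: "M (b2 + 3 * n + k) = qa (rev A) k" if "k < length A" for k using enc_S2[OF that, of e] by (simp add: M_def b2_def n_def)
    show ?thesis unfolding DS_def R2_def using P3 m q Mlt wb lohi b1d b2d ord
      by (simp add: n_def[symmetric])
  qed
  have f1n: "snd F1 \<le> length (rev A)" using fold_bound[of j A "(c0, f0)"] lohi f0n by (simp add: F1_def n_def)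
  define F2 where "F2 = foldl (proc (rev A) (n - lo)) F1 [n - j..<n - se]"
  obtain t2 where t2: "t2 \<le> 16 * ((n - se - (n - j)) + (snd F2 - snd F1)) + 2" "EXS M R2 (snd F2) (fst F2) (run w prog t2 s3)"
    using loop[OF D2 L2 f1n] P3 by (auto simp: R2_def F2_def)
  define s4 where "s4 = run w prog t2 s3"
  have P4: "pc s4 = 60" "regs s4 26 = 1" "regs s4 0 = fst F2"
    using t2(2) P3 unfolding EXS_def s4_def[symmetric] R2_def by auto
  have fin4: "halted prog (run w prog 1 s4)" "regs (run w prog 1 s4) 0 = fst F2"
    using fin[OF P4(1,2)] P4 by auto
  have runT: "run w prog (N0 + t1 + 12 + t2 + 1) s0 = run w prog 1 s4"
    by (simp only: run_add s1_def s2_def s3_def s4_def)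
  have I1: "Inv A lo j pe se {lo..<pe} F1"
    unfolding F1_def by (rule phase1[OF I0]) (use ord lohi in auto)
  have I1': "Inv A lo j pe se ({lo..<pe} \<union> {length A - (n - j)..<j}) F1"
    using I1 lohi by (simp add: n_def)
  have I2: "Inv A lo j pe se ({lo..<pe} \<union> {se..<j}) F2"
    unfolding F2_def using phase2[OF I1'] ord lohi by (simp add: n_def)
  have mode: "is_mode (subarray A i j) (fst F2)"
    using final_mode[OF I2 ord(1,2,3) lohi(1)] subarray_eq[OF ij(1) ij(3)] by (simp add: lo_def)
  have m1: "f0 \<le> snd F1" using fold_mono[of "(c0, f0)"] by (simp add: F1_def)
  have m2: "snd F1 \<le> snd F2" using fold_mono[of F1] by (simp add: F2_def)
  have f2c: "snd F2 \<le> cntR A (fst F2) lo j" using I2 by (simp add: Inv_def)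
  have csplit: "cntR A (fst F2) lo j = cntR A (fst F2) lo pe + cntR A (fst F2) pe se + cntR A (fst F2) se j"
    using cntR_split[of lo pe j A "fst F2"] cntR_split[of pe se j A "fst F2"] ord by simp
  have c1: "cntR A (fst F2) lo pe \<le> pe - lo" "cntR A (fst F2) se j \<le> j - se" by (rule cntR_le)+
  have f2b: "snd F2 \<le> (pe - lo) + f0 + (j - se)" using f2c csplit c1 F0 by (metis add_le_mono le_trans)
  have Tle: "N0 + t1 + 12 + t2 + 1 \<le> 59 + 64 * t"
  proof -
    have e1: "n - se - (n - j) = j - se" using ord lohi by simp
    define p where "p = pe - lo"
    define q where "q = j - se"
    define d1 where "d1 = snd F1 - f0"
    define d2 where "d2 = snd F2 - snd F1"
    have h: "snd F1 = f0 + d1" "snd F2 = f0 + d1 + d2" using m1 m2 by (simp_all add: d1_def d2_def)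
    have "d1 + d2 \<le> p + q" using f2b h by (simp add: p_def q_def)
    moreover have "p < t" "q < t" using ord by (simp_all add: p_def q_def)
    moreover have "t1 \<le> 16 * p + 16 * d1 + 2" "t2 \<le> 16 * q + 16 * d2 + 2"
      using t1(1) t2(1) e1 by (simp_all add: p_def q_def d1_def d2_def)
    ultimately have a: "t1 \<le> 16 * p + 16 * d1 + 2" "t2 \<le> 16 * q + 16 * d2 + 2" "d1 + d2 \<le> p + q"
      "p + 1 \<le> t" "q + 1 \<le> t" by simp_all
    have h3: "16 * d1 + 16 * d2 \<le> 16 * p + 16 * q" using a(3) by simp
    have h4: "t1 + t2 \<le> 32 * p + 32 * q + 4" using a(1,2) h3 by linarith
    have h5: "32 * p + 32 * q + 64 \<le> 64 * t" using a(4,5) by linarith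
    show ?thesis using h4 h5 N0(1) by linarith
  qed
  have "real (N0 + t1 + 12 + t2 + 1) \<le> real (59 + 64 * t)" using Tle by (simp only: of_nat_le_iff)
  also have "\<dots> \<le> 187 * real n powr e" using time_bound[OF e n1] by (simp add: t_def)
  also have "\<dots> \<le> 200 * real n powr e" by simp
  finally have Tr: "real (N0 + t1 + 12 + t2 + 1) \<le> 200 * real (length A) powr e" by (simp add: n_def)
  show ?thesis
    apply (rule exI[of _ "N0 + t1 + 12 + t2 + 1"])
    using Tr runT fin4 mode by (simp add: s0_def M_def w_def n_def)
qed


theorem theorem1:
  fixes \<epsilon> :: real
  assumes "0 \<le> \<epsilon>" and "\<epsilon> \<le> 1/2"
  shows "\<exists>(C::real) (P::instr list) (enc :: nat \<Rightarrow> nat list \<Rightarrow> nat \<Rightarrow> nat).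
     \<forall>(u::nat) (A::nat list).
       length A \<ge> 1 \<and> set A \<subseteq> {..<u} \<longrightarrow>
       (let n = length A; w = wordsize n u; M = enc u A in
          (\<exists>S::nat. real S \<le> C * real n powr (2 - 2 * \<epsilon>) \<and>
                    (\<forall>a \<ge> S. M a = 0) \<and> (\<forall>a. M a < 2 ^ w)) \<and>
          (\<forall>i j. 1 \<le> i \<and> i \<le> j \<and> j \<le> n \<longrightarrow>
             (\<exists>t::nat. real t \<le> C * real n powr \<epsilon> \<and>
                halted P (run w P t (query_init M i j)) \<and>
                is_mode (subarray A i j) (regs (run w P t (query_init M i j)) 0))))"
proof (intro exI[of _ 200] exI[of _ prog] exI[of _ "\<lambda>u A. encM \<epsilon> A"] allI impI)
  fix u :: nat and A :: "nat list"
  assume H: "length A \<ge> 1 \<and> set A \<subseteq> {..<u}"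
  have H1: "1 \<le> length A" "set A \<subseteq> {..<u}" using H by auto
  have m: "\<exists>S::nat. real S \<le> 200 * real (length A) powr (2 - 2 * \<epsilon>) \<and>
                    (\<forall>a \<ge> S. encM \<epsilon> A a = 0) \<and> (\<forall>a. encM \<epsilon> A a < 2 ^ wordsize (length A) u)"
    by (rule mem_part[OF assms H1])
  have q: "\<forall>i j. 1 \<le> i \<and> i \<le> j \<and> j \<le> length A \<longrightarrow>
     (\<exists>T. real T \<le> 200 * real (length A) powr \<epsilon> \<and>
     halted prog (run (wordsize (length A) u) prog T (query_init (encM \<epsilon> A) i j)) \<and>
     is_mode (subarray A i j) (regs (run (wordsize (length A) u) prog T (query_init (encM \<epsilon> A) i j)) 0))"
    using main_query[OF assms H1] by blast
  show "let n = length A; w = wordsize n u; M = encM \<epsilon> A in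
          (\<exists>S::nat. real S \<le> 200 * real n powr (2 - 2 * \<epsilon>) \<and>
                    (\<forall>a \<ge> S. M a = 0) \<and> (\<forall>a. M a < 2 ^ w)) \<and>
          (\<forall>i j. 1 \<le> i \<and> i \<le> j \<and> j \<le> n \<longrightarrow>
             (\<exists>t::nat. real t \<le> 200 * real n powr \<epsilon> \<and>
                halted prog (run w prog t (query_init M i j)) \<and>
                is_mode (subarray A i j) (regs (run w prog t (query_init M i j)) 0)))"
    unfolding Let_def using m q by blast
qed


end
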